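(* Let $d\ge 2$. There are constants $C_1,C_2>0$ depending only on $d$ such that for all $n\ge d+2$, all $\mathcal{F}$, $B_i$, $\mathcal{X}_v,\mathcal{Y}_v$ as in the context, and every $v\in[n]$, $$|\mathcal{Y}_v|\le C_1\left(\binom{n-1}{d-1}-|\mathcal{X}_v|\right)^{\frac{d}{d-1}}+C_2\,n^{\frac{d(d-2)}{d-1}}.$$
   Context: Let $\mathcal{F}=\{F_1,\dots,F_m\}\subseteq\binom{[n]}{d+1}$ consist of distinct sets and have VC-dimension at most $d$ (no $(d+1)$-set $S$ is shattered, i.e. no $S$ such that every $A\subseteq S$ equals $F\cap S$ for some $F\in\mathcal{F}$). For $i\in[m]$, call $B\subsetneq F_i$ admissible for $F_i$ if $F\cap F_i\neq B$ for every $F\in\mathcal{F}$ (admissible sets exist by the VC-dimension assumption). For each $i$, $B_i$ is a fixed admissible set for $F_i$ of maximum cardinality among all admissible sets for $F_i$. For $v\in[n]$, $\mathcal{X}_v:=\{F_k\setminus\{v\}: k\in[m],\ v\in B_k\}$ and $\mathcal{Y}_v:=\{F_k\setminus\{v\}: k\in[m],\ v\in F_k\setminus B_k\}$. *)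

theory Defs
  imports "HOL-Analysis.Analysis"
begin

definition shatters :: "nat set set \<Rightarrow> nat set \<Rightarrow> bool" where
  "shatters \<F> S \<longleftrightarrow> (\<forall>A. A \<subseteq> S \<longrightarrow> (\<exists>F\<in>\<F>. F \<inter> S = A))"

definition vc_dim_le :: "nat set set \<Rightarrow> nat \<Rightarrow> bool" where
  "vc_dim_le \<F> d \<longleftrightarrow> (\<forall>S. finite S \<and> card S = d + 1 \<longrightarrow> \<not> shatters \<F> S)"

definition admissible :: "nat set set \<Rightarrow> nat set \<Rightarrow> nat set \<Rightarrow> bool" where
  "admissible \<F> Fi B \<longleftrightarrow> B \<subset> Fi \<and> (\<forall>F\<in>\<F>. F \<inter> Fi \<noteq> B)"

definition max_admissible :: "nat set set \<Rightarrow> nat set \<Rightarrow> nat set \<Rightarrow> bool" where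
  "max_admissible \<F> Fi B \<longleftrightarrow> admissible \<F> Fi B \<and>
     (\<forall>B'. admissible \<F> Fi B' \<longrightarrow> card B' \<le> card B)"

definition Xfam :: "nat set set \<Rightarrow> (nat set \<Rightarrow> nat set) \<Rightarrow> nat \<Rightarrow> nat set set" where
  "Xfam \<F> B v = {F - {v} | F. F \<in> \<F> \<and> v \<in> B F}"

definition Yfam :: "nat set set \<Rightarrow> (nat set \<Rightarrow> nat set) \<Rightarrow> nat \<Rightarrow> nat set set" where
  "Yfam \<F> B v = {F - {v} | F. F \<in> \<F> \<and> v \<in> F - B F}"

end

theory Submission
  imports Defs
begin


definition sh :: "nat set set \<Rightarrow> nat \<Rightarrow> nat set set" where
  "sh Y k = {T. \<exists>S\<in>Y. T \<subseteq> S \<and> card T = k}"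

definition ext :: "nat set set \<Rightarrow> nat set \<Rightarrow> nat set" where
  "ext Y T = {x. x \<notin> T \<and> insert x T \<in> Y}"

lemma finite_sh:
  assumes "finite Y" "\<forall>S\<in>Y. finite S"
  shows "finite (sh Y k)"
proof -
  have "sh Y k \<subseteq> (\<Union>S\<in>Y. Pow S)" unfolding sh_def by auto
  moreover have "finite (\<Union>S\<in>Y. Pow S)" using assms by auto
  ultimately show ?thesis by (rule finite_subset)
qed

lemma finite_ext:
  assumes "finite Y" "\<forall>S\<in>Y. finite S"
  shows "finite (ext Y T)"
proof -
  have "ext Y T \<subseteq> \<Union>Y" unfolding ext_def by auto
  thus ?thesis using assms by (meson finite_Union finite_subset)
qed

lemma count_swap:
  assumes "finite E" "finite Z"
  shows "(\<Sum>x\<in>E. card {S\<in>Z. x \<in> S}) = (\<Sum>S\<in>Z. card {x\<in>E. x \<in> S})"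
proof -
  have "(\<Sum>x\<in>E. card {S\<in>Z. x \<in> S}) = (\<Sum>x\<in>E. \<Sum>S\<in>Z. if x \<in> S then 1 else 0)"
    using assms by (simp add: sum.inter_filter[symmetric])
  also have "\<dots> = (\<Sum>S\<in>Z. \<Sum>x\<in>E. if x \<in> S then 1 else 0)" by (rule sum.swap)
  also have "\<dots> = (\<Sum>S\<in>Z. card {x\<in>E. x \<in> S})"
    using assms by (simp add: sum.inter_filter[symmetric])
  finally show ?thesis .
qed

lemma lower_aux:
  assumes fin: "finite Y" and unif: "\<forall>S\<in>Y. finite S \<and> card S = Suc k"
    and deg: "\<forall>T\<in>sh Y k. card (ext Y T) \<ge> t"
  shows "j \<le> k \<Longrightarrow> A \<subseteq> S0 \<Longrightarrow> S0 \<in> Y \<Longrightarrow> card A = k - j \<Longrightarrow>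
     t ^ j \<le> fact j * card {S \<in> sh Y k. A \<subseteq> S}"
proof (induction j arbitrary: A S0)
  case 0
  have fA: "finite A" using 0 unif finite_subset by blast
  have "A \<in> sh Y k" using 0 unfolding sh_def by auto
  hence "A \<in> {S \<in> sh Y k. A \<subseteq> S}" by auto
  moreover have "finite {S \<in> sh Y k. A \<subseteq> S}" using finite_sh fin unif by auto
  ultimately have "card {S \<in> sh Y k. A \<subseteq> S} \<ge> 1"
    by (metis One_nat_def Suc_leI card_gt_0_iff empty_iff)
  thus ?case by simp
next
  case (Suc j)
  have fS0: "finite S0" "card S0 = Suc k" using Suc unif by auto
  have fA: "finite A" using Suc fS0 finite_subset by blast
  have "card (S0 - A) = Suc k - (k - Suc j)" using Suc fS0 fA by (simp add: card_Diff_subset)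
  hence "Suc j \<le> card (S0 - A)" using Suc.prems(1) by linarith
  then obtain D where D: "D \<subseteq> S0 - A" "card D = Suc j"
    by (meson obtain_subset_with_card_n)
  define T where "T = A \<union> D"
  have fD: "finite D" using D fS0 finite_subset by (metis finite_Diff)
  have cT: "card T = k" unfolding T_def using D fA fD Suc.prems
    by (subst card_Un_disjoint) auto
  have TS0: "T \<subseteq> S0" using D Suc.prems unfolding T_def by auto
  hence Tsh: "T \<in> sh Y k" unfolding sh_def using cT Suc.prems by auto
  define E where "E = ext Y T"
  have cE: "card E \<ge> t" using deg Tsh E_def by auto
  have fE: "finite E" unfolding E_def using finite_ext fin unif by auto
  define Z where "Z = {S \<in> sh Y k. A \<subseteq> S}"
  have fZ: "finite Z" unfolding Z_def using finite_sh fin unif by auto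
  have IH: "t ^ j \<le> fact j * card {S \<in> sh Y k. insert x A \<subseteq> S}" if "x \<in> E" for x
  proof -
    have xT: "x \<notin> T" "insert x T \<in> Y" using that unfolding E_def ext_def by auto
    have "x \<notin> A" using xT T_def by auto
    hence "card (insert x A) = k - j" using fA Suc.prems by simp
    moreover have "insert x A \<subseteq> insert x T" unfolding T_def by auto
    ultimately show ?thesis using Suc.IH[of "insert x A" "insert x T"] Suc.prems xT by auto
  qed
  have eq: "{S \<in> sh Y k. insert x A \<subseteq> S} = {S\<in>Z. x \<in> S}" for x unfolding Z_def by auto
  have "card E * t ^ j \<le> (\<Sum>x\<in>E. fact j * card {S\<in>Z. x \<in> S})"
  proof -
    have "card E * t ^ j = (\<Sum>x\<in>E. t ^ j)" by simp
    also have "\<dots> \<le> (\<Sum>x\<in>E. fact j * card {S\<in>Z. x \<in> S})"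
      by (rule sum_mono) (use IH eq in auto)
    finally show ?thesis .
  qed
  also have "\<dots> = fact j * (\<Sum>x\<in>E. card {S\<in>Z. x \<in> S})" by (simp add: sum_distrib_left)
  also have "(\<Sum>x\<in>E. card {S\<in>Z. x \<in> S}) = (\<Sum>S\<in>Z. card {x\<in>E. x \<in> S})"
    using count_swap fE fZ by blast
  also have "\<dots> \<le> (\<Sum>S\<in>Z. Suc j)"
  proof (rule sum_mono)
    fix S assume "S \<in> Z"
    hence S: "A \<subseteq> S" "card S = k" "finite S" unfolding Z_def sh_def using unif
      by (auto intro: finite_subset)
    have "{x\<in>E. x \<in> S} \<subseteq> S - A" unfolding E_def ext_def T_def by auto
    hence "card {x\<in>E. x \<in> S} \<le> card (S - A)" using S by (simp add: card_mono)
    also have "\<dots> = Suc j" using S fA Suc.prems by (simp add: card_Diff_subset)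
    finally show "card {x\<in>E. x \<in> S} \<le> Suc j" .
  qed
  also have "(\<Sum>S\<in>Z. Suc j) = Suc j * card Z" by simp
  finally have "card E * t ^ j \<le> fact j * (Suc j * card Z)" by simp
  moreover have "t * t ^ j \<le> card E * t ^ j" using cE by simp
  ultimately have "t ^ Suc j \<le> fact j * (Suc j * card Z)"
    by (metis power_Suc order_trans)
  also have "\<dots> = fact (Suc j) * card Z" by (simp add: fact_Suc algebra_simps)
  finally show ?case unfolding Z_def .
qed

lemma lower:
  assumes fin: "finite Y" and unif: "\<forall>S\<in>Y. finite S \<and> card S = Suc k"
    and deg: "\<forall>T\<in>sh Y k. card (ext Y T) \<ge> t" and ne: "Y \<noteq> {}"
  shows "t ^ k \<le> fact k * card (sh Y k)"
proof -
  obtain S0 where "S0 \<in> Y" using ne by auto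
  hence "t ^ k \<le> fact k * card {S \<in> sh Y k. {} \<subseteq> S}"
    using lower_aux[OF fin unif deg, of k "{}" S0] by auto
  thus ?thesis by simp
qed

lemma peel:
  assumes "finite Y" "\<forall>S\<in>Y. finite S \<and> card S = Suc k"
    "fact k * card (sh Y k) < t ^ k"
  shows "card Y \<le> t * card (sh Y k)"
  using assms
proof (induction "card Y" arbitrary: Y rule: less_induct)
  case less
  note fin = less.prems(1) and unif = less.prems(2)
  show ?case
  proof (cases "Y = {}")
    case True thus ?thesis by simp
  next
    case ne: False
    have "\<not> (\<forall>T\<in>sh Y k. card (ext Y T) \<ge> t)"
      using lower[OF fin unif _ ne] less.prems(3) by (meson not_le)
    then obtain T where T: "T \<in> sh Y k" "card (ext Y T) < t" by (meson not_le)
    define R where "R = {S\<in>Y. T \<subseteq> S}"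
    define Y' where "Y' = Y - R"
    have fsh: "finite (sh Y k)" using finite_sh fin unif by auto
    have R_sub: "R \<subseteq> (\<lambda>x. insert x T) ` ext Y T"
    proof
      fix S assume "S \<in> R"
      hence S: "S \<in> Y" "T \<subseteq> S" unfolding R_def by auto
      have cT: "card T = k" using T unfolding sh_def by auto
      have fS: "finite S" "card S = Suc k" using S unif by auto
      have "card (S - T) = 1" using S fS cT by (simp add: card_Diff_subset finite_subset)
      then obtain x where x: "S - T = {x}" by (meson card_1_singletonE)
      hence "S = insert x T" "x \<notin> T" using S by auto
      thus "S \<in> (\<lambda>x. insert x T) ` ext Y T" unfolding ext_def using S by auto
    qed
    have fext: "finite (ext Y T)" using finite_ext fin unif by auto
    have cR: "card R < t"
      using card_image_le[OF fext, of "\<lambda>x. insert x T"] card_mono[OF finite_imageI[OF fext] R_sub] T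
      by linarith
    have Rne: "R \<noteq> {}" using T unfolding sh_def R_def by auto
    have RY: "R \<subseteq> Y" unfolding R_def by auto
    have cY: "card Y = card Y' + card R" unfolding Y'_def
      using RY fin by (metis card_Diff_subset finite_subset card_mono le_add_diff_inverse2)
    have lt: "card Y' < card Y" using cY Rne RY fin by (metis add_diff_cancel_left' card_0_eq
        diff_less finite_subset le_add1 le_neq_implies_less not_gr0 zero_less_diff)
    have shsub: "sh Y' k \<subseteq> sh Y k - {T}" unfolding sh_def Y'_def R_def by auto
    have "card (sh Y' k) \<le> card (sh Y k - {T})" using shsub fsh by (simp add: card_mono)
    also have "\<dots> = card (sh Y k) - 1" using T fsh by simp
    finally have csh: "card (sh Y' k) \<le> card (sh Y k) - 1" .
    have shpos: "card (sh Y k) \<ge> 1" using T fsh by (metis One_nat_def Suc_leI card_gt_0_iff empty_iff)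
    have "fact k * card (sh Y' k) \<le> fact k * card (sh Y k)" using csh by simp
    hence h3: "fact k * card (sh Y' k) < t ^ k" using less.prems(3) by linarith
    have "card Y' \<le> t * card (sh Y' k)"
      using less.hyps[OF lt _ _ h3] fin unif unfolding Y'_def by auto
    also have "\<dots> \<le> t * (card (sh Y k) - 1)" using csh by simp
    finally have "card Y \<le> t * (card (sh Y k) - 1) + t" using cY cR by linarith
    also have "\<dots> = t * card (sh Y k)" using shpos
      by (metis add.commute mult_Suc_right Suc_diff_1 One_nat_def Suc_le_lessD)
    finally show ?thesis .
  qed
qed


lemma KK_real:
  assumes k: "k \<ge> 1" and fin: "finite Y" and unif: "\<forall>S\<in>Y. finite S \<and> card S = Suc k"
  shows "real (card Y) \<le> (fact k + 2) * real (card (sh Y k)) powr (real (Suc k) / real k)"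
proof (cases "card (sh Y k) = 0")
  case True
  have "card Y \<le> 1 * card (sh Y k)" using peel[OF fin unif, of 1] True by simp
  thus ?thesis using True by simp
next
  case False
  define s where "s = card (sh Y k)"
  have s1: "real s \<ge> 1" using False s_def by simp
  define r0 :: real where "r0 = (fact k * real s) powr (1 / real k)"
  define t where "t = nat \<lceil>r0\<rceil> + 1"
  have r0pos: "r0 \<ge> 0" unfolding r0_def by simp
  have tgt: "real t > r0" unfolding t_def using r0pos by linarith
  have tle: "real t \<le> r0 + 2" unfolding t_def using r0pos by linarith
  have "r0 ^ k = fact k * real s"
    unfolding r0_def using k s1 by (subst powr_power) (auto simp: fact_gt_zero)
  moreover have "r0 ^ k < real t ^ k" using tgt r0pos k by (simp add: power_strict_mono)
  ultimately have "real (fact k * s) < real (t ^ k)" by simp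
  hence "fact k * card (sh Y k) < t ^ k" unfolding s_def of_nat_less_iff .
  hence cY: "card Y \<le> t * s" using peel[OF fin unif] s_def by simp
  define u where "u = real s powr (1 / real k)"
  have u1: "u \<ge> 1" unfolding u_def using s1 by (simp add: ge_one_powr_ge_zero)
  have "(fact k :: real) powr (1 / real k) \<le> fact k powr 1"
    using k by (intro powr_mono) (auto simp: fact_ge_1)
  hence "r0 \<le> fact k * u" unfolding r0_def u_def powr_mult
    by (intro mult_right_mono) auto
  hence "real t \<le> fact k * u + 2 * u" using tle u1 by linarith
  hence "real (card Y) \<le> (fact k * u + 2 * u) * real s"
    using cY by (metis (no_types, lifting) of_nat_mult of_nat_le_iff mult_right_mono of_nat_0_le_iff order_trans)
  also have "\<dots> = (fact k + 2) * (u * real s)" by (simp add: algebra_simps)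
  also have "u * real s = real s powr (real (Suc k) / real k)"
  proof -
    have "real (Suc k) / real k = 1 / real k + 1" using k by (simp add: field_simps)
    thus ?thesis unfolding u_def using s1 by (simp add: powr_add)
  qed
  finally show ?thesis unfolding s_def .
qed



definition pdp :: "'a set \<Rightarrow> 'a set set \<Rightarrow> bool" where
  "pdp K M \<longleftrightarrow> (\<forall>T1\<in>M. \<forall>T2\<in>M. T1 \<noteq> T2 \<longrightarrow> (T1 - K) \<inter> (T2 - K) = {})"

lemma sfl_aux:
  assumes finL: "finite L" and unif: "\<forall>S\<in>L. finite S \<and> card S = r" and r1: "r \<ge> 1"
    and TL: "TT \<subseteq> L"
    and a: "\<forall>T\<in>TT. \<forall>S\<in>L. S \<inter> T \<noteq> {}"
    and b: "\<forall>T\<in>TT. \<forall>W. W \<noteq> {} \<and> W \<subset> T \<longrightarrow> (\<exists>S\<in>L. S \<inter> T = W)"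
  shows "j \<le> r \<Longrightarrow> finite K \<Longrightarrow> card K = r - j \<Longrightarrow> card {T\<in>TT. K \<subseteq> T} \<le> (r*r)^j"
proof (induction j arbitrary: K)
  case 0
  have "{T\<in>TT. K \<subseteq> T} \<subseteq> {K}"
  proof
    fix T assume "T \<in> {T\<in>TT. K \<subseteq> T}"
    hence "K \<subseteq> T" "finite T" "card T = r" using TL unif by auto
    hence "K = T" using 0 by (simp add: card_subset_eq)
    thus "T \<in> {K}" by simp
  qed
  hence "card {T\<in>TT. K \<subseteq> T} \<le> card {K}" by (intro card_mono) auto
  thus ?case by simp
next
  case (Suc j)
  define TK where "TK = {T\<in>TT. K \<subseteq> T}"
  have finTT: "finite TT" using TL finL finite_subset by blast
  have finTK: "finite TK" unfolding TK_def using finTT by auto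
  have TKprop: "T \<in> TT" "K \<subseteq> T" "finite T" "card T = r" "T - K \<noteq> {}" if "T \<in> TK" for T
  proof -
    show "T \<in> TT" "K \<subseteq> T" using that TK_def by auto
    show "finite T" "card T = r" using that TK_def TL unif by auto
    show "T - K \<noteq> {}"
    proof
      assume "T - K = {}"
      hence "T \<subseteq> K" by auto
      hence "card T \<le> card K" using Suc.prems(2) by (rule card_mono[rotated])
      moreover have "card T = r" using that TK_def TL unif by auto
      ultimately show False using Suc.prems by linarith
    qed
  qed
  define Ms where "Ms = {M. M \<subseteq> TK \<and> pdp K M}"
  have finMs: "finite Ms" unfolding Ms_def using finTK by auto
  have "{} \<in> Ms" unfolding Ms_def pdp_def by auto
  hence "Max (card ` Ms) \<in> card ` Ms" using finMs by (intro Max_in) auto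
  then obtain M where M0: "M \<in> Ms" "card M = Max (card ` Ms)" by auto
  hence M: "M \<in> Ms" "\<forall>M'\<in>Ms. card M' \<le> card M" using finMs by auto
  have MTK: "M \<subseteq> TK" and pM: "pdp K M" using M Ms_def by auto
  have finM: "finite M" using MTK finTK finite_subset by blast
  have cM: "card M \<le> r"
  proof (rule ccontr)
    assume "\<not> card M \<le> r"
    hence cM2: "card M \<ge> r + 1" by simp
    show False
    proof (cases "K = {}")
      case True
      have "card M \<ge> 2" using cM2 r1 by linarith
      then obtain T1 T2 where "T1 \<in> M" "T2 \<in> M" "T1 \<noteq> T2"
        by (metis One_nat_def card_le_Suc_iff numeral_2_eq_2 insert_iff)
      hence "T1 \<inter> T2 = {}" using pM True unfolding pdp_def by auto
      moreover have "T1 \<in> TT" "T2 \<in> L" using \<open>T1 \<in> M\<close> \<open>T2 \<in> M\<close> MTK TKprop TL by blast+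
      ultimately show False using a by blast
    next
      case Kne: False
      have "M \<noteq> {}" using cM2 by auto
      then obtain T1 where T1: "T1 \<in> M" by auto
      have T1TK: "T1 \<in> TK" using T1 MTK by auto
      note T1p = TKprop[OF T1TK]
      have "T1 - K \<subset> T1" using T1p Kne by auto
      have bb: "\<And>W. W \<noteq> {} \<Longrightarrow> W \<subset> T1 \<Longrightarrow> \<exists>S\<in>L. S \<inter> T1 = W"
        using b T1p(1) by simp
      obtain S where S: "S \<in> L" "S \<inter> T1 = T1 - K" using bb[OF T1p(5) \<open>T1 - K \<subset> T1\<close>] by blast
      have fS: "finite S" "card S = r" using S unif by auto
      have SK: "S \<inter> K = {}" using S T1p by auto
      have hit: "\<exists>x. x \<in> S - T1 \<and> x \<in> T - K" if "T \<in> M - {T1}" for T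
      proof -
        have "T \<in> TK" using that MTK by auto
        hence "T \<in> TT" using TKprop by blast
        then obtain x where x: "x \<in> S" "x \<in> T" using a S by blast
        have "x \<notin> K" using SK x by auto
        moreover have "(T - K) \<inter> (T1 - K) = {}" using pM that T1 unfolding pdp_def by auto
        ultimately have "x \<notin> T1" using x by auto
        thus ?thesis using x \<open>x \<notin> K\<close> by auto
      qed
      define f where "f T = (SOME x. x \<in> S - T1 \<and> x \<in> T - K)" for T
      have fP: "f T \<in> S - T1 \<and> f T \<in> T - K" if "T \<in> M - {T1}" for T
        unfolding f_def using someI_ex[OF hit[OF that]] .
      have "inj_on f (M - {T1})"
      proof (rule inj_onI)
        fix T T' assume "T \<in> M - {T1}" "T' \<in> M - {T1}" "f T = f T'"
        hence A: "f T \<in> T - K" "f T \<in> T' - K" "T \<in> M" "T' \<in> M" using fP[of T] fP[of T'] by auto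
        show "T = T'"
        proof (rule ccontr)
          assume "T \<noteq> T'"
          hence "(T - K) \<inter> (T' - K) = {}" using pM A(3,4) unfolding pdp_def by blast
          thus False using A(1,2) by blast
        qed
      qed
      hence "card (M - {T1}) \<le> card (S - T1)"
        using fP fS by (intro card_inj_on_le) auto
      moreover have "card (M - {T1}) = card M - 1" using T1 finM by simp
      moreover have "card (S - T1) \<le> r - 1"
      proof -
        have "card (S - T1) = card S - card (S \<inter> T1)" using fS by (metis card_Diff_subset_Int
              finite_Int Diff_Int2 inf.idem Int_commute) 
        moreover have "card (S \<inter> T1) \<ge> 1" using S T1p fS
          by (metis One_nat_def Suc_leI card_gt_0_iff finite_Diff)
        ultimately show ?thesis using fS by linarith
      qed
      ultimately show False using cM2 r1 by linarith
    qed
  qed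
  define U where "U = (\<Union>T\<in>M. T - K)"
  have cU: "card U \<le> r * r"
  proof -
    have "card U \<le> (\<Sum>T\<in>M. card (T - K))" unfolding U_def using finM by (rule card_UN_le)
    also have "\<dots> \<le> (\<Sum>T\<in>M. r)"
      using MTK TKprop by (intro sum_mono) (metis card_Diff_subset card_mono diff_le_self subsetD
          finite_subset)
    also have "\<dots> = card M * r" by simp
    also have "\<dots> \<le> r * r" using cM by simp
    finally show ?thesis .
  qed
  have finU: "finite U" unfolding U_def
  proof (rule finite_UN_I[OF finM])
    fix T assume "T \<in> M"
    hence "T \<in> TK" using MTK by auto
    hence "finite T" using TKprop by blast
    thus "finite (T - K)" by simp
  qed
  have cover: "TK \<subseteq> (\<Union>u\<in>U - K. {T\<in>TT. insert u K \<subseteq> T})"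
  proof
    fix T assume T: "T \<in> TK"
    have "(T - K) \<inter> U \<noteq> {}"
    proof
      assume dis: "(T - K) \<inter> U = {}"
      show False
      proof (cases "T \<in> M")
        case True
        hence "T - K \<subseteq> U" unfolding U_def by auto
        thus False using dis TKprop[OF T] by auto
      next
        case False
        have "insert T M \<in> Ms" unfolding Ms_def pdp_def
        proof (intro CollectI conjI)
          show "insert T M \<subseteq> TK" using T MTK by auto
          show "\<forall>T1\<in>insert T M. \<forall>T2\<in>insert T M. T1 \<noteq> T2 \<longrightarrow> (T1 - K) \<inter> (T2 - K) = {}"
            using pM dis unfolding pdp_def U_def by blast
        qed
        hence "card (insert T M) \<le> card M" using M by auto
        thus False using False finM by simp
      qed
    qed
    then obtain u where "u \<in> T - K" "u \<in> U" by auto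
    thus "T \<in> (\<Union>u\<in>U - K. {T\<in>TT. insert u K \<subseteq> T})" using T TKprop by auto
  qed
  have "card TK \<le> card (\<Union>u\<in>U - K. {T\<in>TT. insert u K \<subseteq> T})"
    using cover finTT by (intro card_mono) (auto intro: finite_subset[of _ TT])
  also have "\<dots> \<le> (\<Sum>u\<in>U - K. card {T\<in>TT. insert u K \<subseteq> T})"
    using finU by (intro card_UN_le) auto
  also have "\<dots> \<le> (\<Sum>u\<in>U - K. (r*r)^j)"
  proof (rule sum_mono)
    fix u assume u: "u \<in> U - K"
    have "card (insert u K) = r - j" using u Suc.prems by auto
    moreover have "finite (insert u K)" using Suc.prems by simp
    moreover have "j \<le> r" using Suc.prems by simp
    ultimately show "card {T\<in>TT. insert u K \<subseteq> T} \<le> (r*r)^j" using Suc.IH by blast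
  qed
  also have "\<dots> = card (U - K) * (r*r)^j" by simp
  also have "\<dots> \<le> (r * r) * (r*r)^j"
    using cU finU by (intro mult_right_mono) (auto intro: order_trans[OF card_mono])
  finally show ?case unfolding TK_def by simp
qed

lemma sfl:
  assumes finL: "finite L" and unif: "\<forall>S\<in>L. finite S \<and> card S = r" and r1: "r \<ge> 1"
    and TL: "TT \<subseteq> L"
    and a: "\<forall>T\<in>TT. \<forall>S\<in>L. S \<inter> T \<noteq> {}"
    and b: "\<forall>T\<in>TT. \<forall>W. W \<noteq> {} \<and> W \<subset> T \<longrightarrow> (\<exists>S\<in>L. S \<inter> T = W)"
  shows "card TT \<le> (r*r)^r"
  using sfl_aux[OF assms, of r "{}"] by simp



locale setting =
  fixes d n :: nat and FF :: "nat set set" and B :: "nat set \<Rightarrow> nat set" and v :: nat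
  assumes d2: "d \<ge> 2" and nd: "n \<ge> d + 2"
    and FFs: "FF \<subseteq> {F. F \<subseteq> {1..n} \<and> card F = d + 1}"
    and madm: "\<forall>F\<in>FF. max_admissible FF F (B F)"
    and vn: "v \<in> {1..n}"
begin

definition "L = {F - {v} | F. F \<in> FF \<and> v \<in> F}"
definition "X = Xfam FF B v"
definition "Y = Yfam FF B v"
definition "Xg = {T\<in>X. card (B (insert v T)) = d}"
definition "Xb = X - Xg"

lemma FFp: "F \<in> FF \<Longrightarrow> finite F \<and> F \<subseteq> {1..n} \<and> card F = d + 1"
  using FFs by (auto intro: finite_subset)

lemma finFF: "finite FF"
  using FFs by (metis (no_types, lifting) finite_Pow_iff finite_atLeastAtMost finite_subset
      mem_Collect_eq PowI subsetI subset_iff)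

lemma adm: "F \<in> FF \<Longrightarrow> B F \<subset> F \<and> (\<forall>G\<in>FF. G \<inter> F \<noteq> B F)"
  using madm unfolding max_admissible_def admissible_def by auto

lemma maxi: "F \<in> FF \<Longrightarrow> B' \<subset> F \<Longrightarrow> card B' > card (B F) \<Longrightarrow> \<exists>G\<in>FF. G \<inter> F = B'"
  using madm unfolding max_admissible_def admissible_def by (meson not_le)

lemma K1:
  assumes F: "F \<in> FF" and G: "G \<in> FF" "G \<noteq> F" and c: "card (B F) = d" and BG: "B F \<subseteq> G"
  shows False
proof -
  have fF: "finite F" "card F = d + 1" using FFp F by auto
  have fG: "finite G" "card G = d + 1" using FFp G by auto
  have BF: "B F \<subseteq> F" using adm F by auto
  have "card (G \<inter> F) \<le> d"
  proof (rule ccontr)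
    assume "\<not> card (G \<inter> F) \<le> d"
    hence "card (G \<inter> F) = card F" using fF card_mono[of F "G \<inter> F"] by (simp add: card_mono)
    hence "G \<inter> F = F" using fF by (metis card_subset_eq inf_le2)
    hence "F \<subseteq> G" by auto
    hence "F = G" using fF fG by (simp add: card_subset_eq)
    thus False using G by simp
  qed
  moreover have "B F \<subseteq> G \<inter> F" using BF BG by auto
  moreover have fGF: "finite (G \<inter> F)" using fF by simp
  ultimately have "card (B F) = card (G \<inter> F)" using c card_mono[OF fGF] by (metis le_antisym)
  hence "B F = G \<inter> F" using card_subset_eq[OF fGF \<open>B F \<subseteq> G \<inter> F\<close>] by simp
  thus False using adm[OF F] G by auto
qed

lemma Xp: "T \<in> X \<Longrightarrow> insert v T \<in> FF \<and> v \<notin> T \<and> v \<in> B (insert v T) \<and> T = insert v T - {v}"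
proof -
  assume "T \<in> X"
  then obtain F where F: "T = F - {v}" "F \<in> FF" "v \<in> B F" unfolding X_def Xfam_def by auto
  have "v \<in> F" using adm[OF F(2)] F(3) by auto
  hence "insert v T = F" using F by auto
  thus ?thesis using F by auto
qed

lemma Yp: "T \<in> Y \<Longrightarrow> insert v T \<in> FF \<and> v \<notin> T \<and> v \<notin> B (insert v T) \<and> T = insert v T - {v}"
proof -
  assume "T \<in> Y"
  then obtain F where F: "T = F - {v}" "F \<in> FF" "v \<in> F - B F" unfolding Y_def Yfam_def by auto
  hence "insert v T = F" using F by auto
  thus ?thesis using F by auto
qed

lemma Lp: "S \<in> L \<Longrightarrow> insert v S \<in> FF \<and> v \<notin> S \<and> finite S \<and> card S = d \<and> S \<subseteq> {1..n} - {v}"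
proof -
  assume "S \<in> L"
  then obtain F where F: "S = F - {v}" "F \<in> FF" "v \<in> F" unfolding L_def by auto
  have "insert v S = F" using F by auto
  thus ?thesis using F FFp[OF F(2)] by auto
qed

lemma XL: "X \<subseteq> L"
  unfolding X_def Xfam_def L_def using adm by blast

lemma YL: "Y \<subseteq> L"
  unfolding Y_def Yfam_def L_def by blast

lemma finL: "finite L"
proof -
  have "L = (\<lambda>F. F - {v}) ` {F\<in>FF. v \<in> F}" unfolding L_def by auto
  thus ?thesis using finFF by simp
qed


lemma finX: "finite X" using XL finL finite_subset by blast
lemma finY: "finite Y" using YL finL finite_subset by blast

lemma Xg_part: "card Xg + card (sh Y (d - 1)) \<le> (n - 1) choose (d - 1)"
proof -
  define P where "P = {R. R \<subseteq> {1..n} - {v} \<and> card R = d - 1}"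
  define Rm where "Rm T = B (insert v T) - {v}" for T
  have XgX: "Xg \<subseteq> X" unfolding Xg_def by auto
  have finXg: "finite Xg" using XgX finX finite_subset by blast
  have Rp: "Rm T \<in> P \<and> insert v (Rm T) = B (insert v T)" if T: "T \<in> Xg" for T
  proof -
    have TX: "T \<in> X" and c: "card (B (insert v T)) = d" using T Xg_def by auto
    note xp = Xp[OF TX]
    have "B (insert v T) \<subseteq> insert v T" using adm xp by auto
    moreover have "insert v T \<subseteq> {1..n}" using FFp xp by blast
    moreover have "finite (B (insert v T))" using c d2 by (metis card.infinite not_numeral_le_zero)
    ultimately show ?thesis unfolding Rm_def P_def using c xp by auto
  qed
  have inj: "inj_on Rm Xg"
  proof (rule inj_onI)
    fix T1 T2 assume T: "T1 \<in> Xg" "T2 \<in> Xg" "Rm T1 = Rm T2"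
    hence eqB: "B (insert v T1) = B (insert v T2)" using Rp by metis
    have x1: "insert v T1 \<in> FF" "card (B (insert v T1)) = d" using T Xp Xg_def by auto
    have x2: "insert v T2 \<in> FF" using T Xp Xg_def by auto
    have "B (insert v T2) \<subseteq> insert v T2" using adm x2 by auto
    hence "insert v T1 = insert v T2" using K1[OF x1(1) x2 _ x1(2)] eqB by auto
    thus "T1 = T2" using T Xp Xg_def by (metis (no_types, lifting) mem_Collect_eq)
  qed
  have disj: "Rm ` Xg \<inter> sh Y (d - 1) = {}"
  proof (rule ccontr)
    assume "Rm ` Xg \<inter> sh Y (d - 1) \<noteq> {}"
    then obtain T S where T: "T \<in> Xg" "Rm T \<subseteq> S" "S \<in> Y" unfolding sh_def by auto
    have x1: "insert v T \<in> FF" "card (B (insert v T)) = d" "v \<in> B (insert v T)"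
      using T Xp Xg_def by auto
    note yp = Yp[OF T(3)]
    have "B (insert v T) \<subseteq> insert v S" using Rp[OF T(1)] T by auto
    moreover have "insert v S \<noteq> insert v T" using yp x1 by auto
    ultimately show False using K1[OF x1(1) _ _ x1(2)] yp by auto
  qed
  have "Rm ` Xg \<subseteq> P" using Rp by auto
  moreover have "sh Y (d - 1) \<subseteq> P" unfolding sh_def P_def using YL Lp by blast
  ultimately have "Rm ` Xg \<union> sh Y (d - 1) \<subseteq> P" by auto
  moreover have "finite P" unfolding P_def by auto
  ultimately have "card (Rm ` Xg \<union> sh Y (d - 1)) \<le> card P" by (simp add: card_mono)
  moreover have "card (Rm ` Xg \<union> sh Y (d - 1)) = card Xg + card (sh Y (d - 1))"
  proof -
    have "finite (sh Y (d - 1))" using finite_sh finY YL Lp by blast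
    thus ?thesis using disj finXg card_image[OF inj] by (simp add: card_Un_disjoint)
  qed
  moreover have "card P = (n - 1) choose (d - 1)"
  proof -
    have "card ({1..n} - {v}) = n - 1" using vn by simp
    thus ?thesis unfolding P_def using n_subsets[of "{1..n} - {v}" "d - 1"] by simp
  qed
  ultimately show ?thesis by simp
qed


definition "Bp T = B (insert v T) - {v}"

lemma Xbp: assumes T: "T \<in> Xb"
  shows "insert v T \<in> FF" "v \<notin> T" "v \<in> B (insert v T)" "B (insert v T) = insert v (Bp T)"
    "Bp T \<subseteq> T" "finite (Bp T)" "card (Bp T) \<le> d - 2" "T \<in> L" "finite T" "card T = d"
proof -
  have TX: "T \<in> X" and c: "card (B (insert v T)) \<noteq> d" using T Xb_def Xg_def by auto
  note xp = Xp[OF TX]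
  show "insert v T \<in> FF" "v \<notin> T" "v \<in> B (insert v T)" using xp by auto
  show "B (insert v T) = insert v (Bp T)" using xp Bp_def by auto
  have ps: "B (insert v T) \<subset> insert v T" using adm xp by auto
  thus "Bp T \<subseteq> T" unfolding Bp_def by auto
  have fF: "finite (insert v T)" "card (insert v T) = d + 1" using FFp[of "insert v T"] xp by auto
  have "card (B (insert v T)) < d + 1" using psubset_card_mono[OF fF(1) ps] fF by simp
  hence c2: "card (B (insert v T)) \<le> d - 1" using c by linarith
  have fB: "finite (B (insert v T))" using ps fF finite_subset by blast
  thus "finite (Bp T)" unfolding Bp_def by auto
  show "card (Bp T) \<le> d - 2" unfolding Bp_def using c2 fB xp by (simp add: card_Diff_singleton)
  show "T \<in> L" using XL TX by auto
  thus "finite T" "card T = d" using Lp by auto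
qed

lemma cTT:
  assumes Bs: "card B' \<le> d - 2" "finite B'"
  shows "card {T - B' | T. T \<in> Xb \<and> Bp T = B'} \<le> (d*d)^d"
proof -
  define L' where "L' = {S - B' | S. S \<in> L \<and> B' \<subseteq> S}"
  define TT where "TT = {T - B' | T. T \<in> Xb \<and> Bp T = B'}"
  define r where "r = d - card B'"
  have r2: "r \<ge> 1" using Bs d2 r_def by linarith
  have finL': "finite L'"
  proof -
    have "L' = (\<lambda>S. S - B') ` {S\<in>L. B' \<subseteq> S}" unfolding L'_def by auto
    thus ?thesis using finL by simp
  qed
  have unif: "\<forall>S\<in>L'. finite S \<and> card S = r"
  proof
    fix S' assume "S' \<in> L'"
    then obtain S where S: "S' = S - B'" "S \<in> L" "B' \<subseteq> S" unfolding L'_def by auto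
    thus "finite S' \<and> card S' = r" using Lp[OF S(2)] Bs r_def by (simp add: card_Diff_subset)
  qed
  have TL: "TT \<subseteq> L'"
  proof
    fix T' assume "T' \<in> TT"
    then obtain T where T: "T' = T - B'" "T \<in> Xb" "Bp T = B'" unfolding TT_def by auto
    have "T \<in> L" "B' \<subseteq> T" using Xbp(8)[OF T(2)] Xbp(5)[OF T(2)] T(3) by auto
    thus "T' \<in> L'" unfolding L'_def using T(1) by blast
  qed
  have a: "\<forall>T'\<in>TT. \<forall>S'\<in>L'. S' \<inter> T' \<noteq> {}"
  proof (intro ballI)
    fix T' S' assume "T' \<in> TT" "S' \<in> L'"
    then obtain T S where T: "T' = T - B'" "T \<in> Xb" "Bp T = B'" and
      S: "S' = S - B'" "S \<in> L" "B' \<subseteq> S" unfolding TT_def L'_def by auto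
    show "S' \<inter> T' \<noteq> {}"
    proof
      assume e: "S' \<inter> T' = {}"
      note xb = Xbp[OF T(2)]
      note lp = Lp[OF S(2)]
      have "S \<inter> T = B'" using e S T xb by auto
      hence "insert v S \<inter> insert v T = B (insert v T)" using xb T by auto
      thus False using adm[OF xb(1)] lp by auto
    qed
  qed
  have b: "\<forall>T'\<in>TT. \<forall>W. W \<noteq> {} \<and> W \<subset> T' \<longrightarrow> (\<exists>S'\<in>L'. S' \<inter> T' = W)"
  proof (intro ballI allI impI)
    fix T' W assume "T' \<in> TT" and W: "W \<noteq> {} \<and> W \<subset> T'"
    then obtain T where T: "T' = T - B'" "T \<in> Xb" "Bp T = B'" unfolding TT_def by auto
    note xb = Xbp[OF T(2)]
    define F where "F = insert v T"
    define B2 where "B2 = insert v (B' \<union> W)"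
    have WT: "W \<subseteq> T - B'" using W T by auto
    obtain x where x: "x \<in> T - B'" "x \<notin> W" using W T by auto
    have B2F: "B2 \<subset> F" unfolding B2_def F_def using WT x xb T by auto
    have fF: "finite F" using F_def xb by simp
    have BFB2: "B F \<subset> B2"
    proof -
      obtain w where "w \<in> W" using W by auto
      thus ?thesis unfolding B2_def F_def using xb T WT by auto
    qed
    have "card (B F) < card B2"
      using psubset_card_mono[OF finite_subset[OF psubset_imp_subset[OF B2F] fF] BFB2] .
    then obtain G where G: "G \<in> FF" "G \<inter> F = B2" using maxi[OF _ B2F] xb F_def by auto
    have vG: "v \<in> G" using G B2_def by auto
    define S where "S = G - {v}"
    have SL: "S \<in> L" unfolding S_def L_def using G vG by auto
    have vB': "v \<notin> B'" using T Bp_def by auto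
    have BS: "B' \<subseteq> S" unfolding S_def using G B2_def vB' by auto
    have "(S - B') \<inter> T' = W"
    proof -
      have "(S - B') \<inter> T' = (G \<inter> F) - {v} - B'" unfolding S_def F_def T(1) by auto
      also have "\<dots> = W" using G B2_def WT xb by auto
      finally show ?thesis .
    qed
    thus "\<exists>S'\<in>L'. S' \<inter> T' = W" unfolding L'_def using SL BS by blast
  qed
  have "card TT \<le> (r*r)^r" using sfl[OF finL' unif r2 TL a b] .
  also have "\<dots> \<le> (d*d)^r" using r_def by (intro power_mono) (auto intro: mult_le_mono)
  also have "\<dots> \<le> (d*d)^d" using r_def d2 by (intro power_increasing) auto
  finally show ?thesis unfolding TT_def .
qed


lemma Bs_card: "card {B'. B' \<subseteq> {1..n} \<and> card B' \<le> d - 2} \<le> (d - 1) * n ^ (d - 2)"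
proof -
  have eq: "{B'. B' \<subseteq> {1..n} \<and> card B' \<le> d - 2} = (\<Union>j\<in>{..d-2}. {B'. B' \<subseteq> {1..n} \<and> card B' = j})"
    by auto
  have "card (\<Union>j\<in>{..d-2}. {B'. B' \<subseteq> {1..n} \<and> card B' = j})
      \<le> (\<Sum>j\<in>{..d-2}. card {B'. B' \<subseteq> {1..n} \<and> card B' = j})" by (rule card_UN_le) simp
  also have "\<dots> \<le> (\<Sum>j\<in>{..d-2}. n ^ (d - 2))"
  proof (rule sum_mono)
    fix j assume j: "j \<in> {..d-2}"
    have "card {B'. B' \<subseteq> {1..n} \<and> card B' = j} = n choose j" using n_subsets[of "{1..n}" j] by simp
    also have "\<dots> \<le> n ^ j" using j nd by (intro binomial_le_pow) auto
    also have "\<dots> \<le> n ^ (d - 2)" using j nd by (intro power_increasing) auto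
    finally show "card {B'. B' \<subseteq> {1..n} \<and> card B' = j} \<le> n ^ (d - 2)" .
  qed
  also have "\<dots> = (d - 1) * n ^ (d - 2)"
  proof -
    have "card {..d-2} = d - 1" using d2 by simp
    thus ?thesis by simp
  qed
  finally show ?thesis using eq by simp
qed

lemma Xb_part: "card Xb \<le> (d - 1) * n ^ (d - 2) * (d*d)^d"
proof -
  define Bs where "Bs = {B'. B' \<subseteq> {1..n} \<and> card B' \<le> d - 2}"
  define TT where "TT B' = {T - B' | T. T \<in> Xb \<and> Bp T = B'}" for B'
  define phi where "phi T = (Bp T, T - Bp T)" for T
  have inj: "inj_on phi Xb"
  proof (rule inj_onI)
    fix T1 T2 assume T: "T1 \<in> Xb" "T2 \<in> Xb" "phi T1 = phi T2"
    have "T1 = Bp T1 \<union> (T1 - Bp T1)" "T2 = Bp T2 \<union> (T2 - Bp T2)"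
      using Xbp(5)[OF T(1)] Xbp(5)[OF T(2)] by auto
    thus "T1 = T2" using T(3) unfolding phi_def by (metis prod.inject)
  qed
  have sub: "phi ` Xb \<subseteq> Sigma Bs TT"
  proof
    fix p assume "p \<in> phi ` Xb"
    then obtain T where T: "T \<in> Xb" "p = phi T" by auto
    have "Bp T \<subseteq> {1..n}"
    proof -
      have "insert v T \<subseteq> {1..n}" using FFp[of "insert v T"] Xbp(1)[OF T(1)] by blast
      thus ?thesis using Xbp(5)[OF T(1)] by auto
    qed
    hence "Bp T \<in> Bs" unfolding Bs_def using Xbp(7)[OF T(1)] by auto
    moreover have "T - Bp T \<in> TT (Bp T)" unfolding TT_def using T by auto
    ultimately show "p \<in> Sigma Bs TT" using T unfolding phi_def by auto
  qed
  have finBs: "finite Bs" unfolding Bs_def by auto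
  have cT: "card (TT B') \<le> (d*d)^d" if "B' \<in> Bs" for B'
    using cTT[of B'] that unfolding Bs_def TT_def by (auto intro: finite_subset)
  have finTT: "finite (TT B')" if "B' \<in> Bs" for B'
  proof -
    have "TT B' = (\<lambda>T. T - B') ` {T\<in>Xb. Bp T = B'}" unfolding TT_def by auto
    moreover have "finite Xb" unfolding Xb_def using finX by auto
    ultimately show ?thesis by simp
  qed
  have "card Xb = card (phi ` Xb)" using card_image[OF inj] by simp
  also have "\<dots> \<le> card (Sigma Bs TT)" using sub finBs finTT by (intro card_mono) auto
  also have "\<dots> = (\<Sum>B'\<in>Bs. card (TT B'))" using finBs finTT by (simp add: card_SigmaI)
  also have "\<dots> \<le> (\<Sum>B'\<in>Bs. (d*d)^d)" using cT by (intro sum_mono) auto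
  also have "\<dots> = card Bs * (d*d)^d" by simp
  also have "\<dots> \<le> (d - 1) * n ^ (d - 2) * (d*d)^d" using Bs_card unfolding Bs_def by simp
  finally show ?thesis .
qed

end


lemma final_real:
  fixes cK K p D b s y N :: real
  assumes "0 \<le> s" "s \<le> D + b" "b \<le> K * N" "0 \<le> b" "0 \<le> cK" "0 \<le> K" "0 \<le> N" "0 \<le> p"
    "y \<le> cK * s powr p"
  shows "y \<le> cK * 2 powr p * D powr p + cK * (2 * K) powr p * N powr p"
proof (cases "D \<le> K * N")
  case True
  have "s powr p \<le> (2 * K * N) powr p" using assms True by (intro powr_mono2) auto
  also have "\<dots> = (2 * K) powr p * N powr p" by (simp add: powr_mult)
  finally have "cK * s powr p \<le> cK * (2 * K) powr p * N powr p"
    using assms(5) by (metis mult.assoc mult_left_mono)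
  moreover have "0 \<le> cK * 2 powr p * D powr p" using assms(5) by simp
  ultimately show ?thesis using assms(9) by linarith
next
  case False
  have "s powr p \<le> (2 * D) powr p" using assms False by (intro powr_mono2) auto
  also have "\<dots> = 2 powr p * D powr p" by (simp add: powr_mult)
  finally have "cK * s powr p \<le> cK * 2 powr p * D powr p"
    using assms(5) by (metis mult.assoc mult_left_mono)
  moreover have "0 \<le> cK * (2 * K) powr p * N powr p" using assms(5) by simp
  ultimately show ?thesis using assms(9) by linarith
qed

context setting begin

lemma bound:
  defines "p \<equiv> real d / (real d - 1)"
    and "cK \<equiv> (fact (d - 1) + 2 :: real)"
    and "K \<equiv> real ((d - 1) * (d*d)^d)"
  shows "real (card Y) \<le> cK * 2 powr p * (real ((n - 1) choose (d - 1)) - real (card X)) powr p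
     + cK * (2 * K) powr p * (real n ^ (d - 2)) powr p"
proof -
  have unif: "\<forall>S\<in>Y. finite S \<and> card S = Suc (d - 1)" using YL Lp d2 by auto
  have "real (card Y) \<le> cK * real (card (sh Y (d - 1))) powr (real (Suc (d - 1)) / real (d - 1))"
    unfolding cK_def using KK_real[OF _ finY unif] d2 by auto
  also have "real (Suc (d - 1)) / real (d - 1) = p" unfolding p_def using d2 by (simp add: of_nat_diff)
  finally have yb: "real (card Y) \<le> cK * real (card (sh Y (d - 1))) powr p" .
  have cX: "card X = card Xg + card Xb"
  proof -
    have "Xg \<subseteq> X" unfolding Xg_def by auto
    thus ?thesis unfolding Xb_def using finX by (metis card_Diff_subset card_mono finite_subset le_add_diff_inverse)
  qed
  have s: "real (card (sh Y (d - 1))) \<le> (real ((n - 1) choose (d - 1)) - real (card X)) + real (card Xb)"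
    using Xg_part cX by linarith
  have b: "real (card Xb) \<le> K * real n ^ (d - 2)"
  proof -
    have e: "(d - 1) * n ^ (d - 2) * (d*d)^d = (d - 1) * (d*d)^d * n ^ (d - 2)" by (simp only: ac_simps)
    have "real (card Xb) \<le> real ((d - 1) * (d*d)^d * n ^ (d - 2))" using Xb_part e by (metis of_nat_le_iff)
    thus ?thesis unfolding K_def by (simp only: of_nat_mult of_nat_power)
  qed
  have p0: "0 \<le> p" unfolding p_def using d2 by simp
  show ?thesis
    by (rule final_real[OF _ s b]) (use yb p0 in \<open>auto simp: cK_def K_def\<close>)
qed

end

theorem claim3p4:
  fixes d :: nat
  assumes "d \<ge> 2"
  shows "\<exists>C1 C2 :: real. C1 > 0 \<and> C2 > 0 \<and>
    (\<forall>(n::nat) (\<F>::nat set set) (B::nat set \<Rightarrow> nat set) (v::nat).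
       n \<ge> d + 2 \<and>
       \<F> \<subseteq> {F. F \<subseteq> {1..n} \<and> card F = d + 1} \<and>
       vc_dim_le \<F> d \<and>
       (\<forall>F\<in>\<F>. max_admissible \<F> F (B F)) \<and>
       v \<in> {1..n}
       \<longrightarrow> real (card (Yfam \<F> B v))
           \<le> C1 * (real ((n - 1) choose (d - 1)) - real (card (Xfam \<F> B v)))
                   powr (real d / (real d - 1))
              + C2 * real n powr (real d * (real d - 2) / (real d - 1)))"
proof -
  define p where "p = real d / (real d - 1)"
  define cK where "cK = (fact (d - 1) + 2 :: real)"
  define K where "K = real ((d - 1) * (d*d)^d)"
  have cK0: "cK > 0" unfolding cK_def by (simp add: add_pos_pos)
  have K0: "K > 0" unfolding K_def using assms by simp
  show ?thesis
  proof (intro exI conjI allI impI)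
    show "cK * 2 powr p > 0" using cK0 by simp
    show "cK * (2 * K) powr p > 0" using cK0 K0 by simp
    fix n FF B v
    assume H: "n \<ge> d + 2 \<and> FF \<subseteq> {F. F \<subseteq> {1..n} \<and> card F = d + 1} \<and> vc_dim_le FF d \<and>
       (\<forall>F\<in>FF. max_admissible FF F (B F)) \<and> v \<in> {1..n}"
    interpret setting d n FF B v using H assms by unfold_locales auto
    have n0: "real n > 0" using H by simp
    have "(real n ^ (d - 2)) powr p = real n powr (real d * (real d - 2) / (real d - 1))"
    proof -
      have "real n ^ (d - 2) = real n powr real (d - 2)" using n0 by (simp add: powr_realpow)
      hence "(real n ^ (d - 2)) powr p = real n powr (real (d - 2) * p)" by (simp add: powr_powr)
      also have "real (d - 2) * p = real d * (real d - 2) / (real d - 1)"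
        unfolding p_def using assms by (simp add: of_nat_diff)
      finally show ?thesis .
    qed
    thus "real (card (Yfam FF B v))
           \<le> cK * 2 powr p * (real ((n - 1) choose (d - 1)) - real (card (Xfam FF B v)))
                   powr (real d / (real d - 1))
              + cK * (2 * K) powr p * real n powr (real d * (real d - 2) / (real d - 1))"
      using bound unfolding X_def Y_def p_def cK_def K_def by simp
  qed
qed

end
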